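(* For deterministic algorithms, none of the following problems can be solved in time less than $\Omega(|G|)$: (1) given two Abelian groups $G$ and $H$, decide whether $G$ is isomorphic to $H$; (2) given an Abelian group $G$, find a basis for $G$; (3) given an Abelian group $G$, find generators for $G$ with relations of size at most $n^{o(1)}$, where $n=|G|$.
   Context: The algorithm accesses elements of the groups and queries their Cayley tables (products of pairs of elements), each access costing one unit of time. A basis of a finite Abelian group $G$ is a tuple $a_1,\ldots,a_t$ such that $G$ is the internal direct product of the nontrivial cyclic subgroups $\langle a_1\rangle,\ldots,\langle a_t\rangle$. Relations for generators are equations between products of powers of the generators that together determine the group; their size is their total description length. *)

theory Defs
  imports "HOL-Algebra.Algebra" "HOL-Analysis.Analysis"
begin

text \<open>A group of order n is presented to an algorithm by its Cayley table on the
labels 0..n-1 (an arbitrary labelling). The identity is not given; it is the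
unique left-neutral label.\<close>

definition tab_one :: "nat \<Rightarrow> (nat \<Rightarrow> nat \<Rightarrow> nat) \<Rightarrow> nat" where
  "tab_one n mul = (THE e. e < n \<and> (\<forall>x<n. mul e x = x))"

definition tab_grp :: "nat \<Rightarrow> (nat \<Rightarrow> nat \<Rightarrow> nat) \<Rightarrow> nat monoid" where
  "tab_grp n mul = \<lparr>carrier = {..<n}, monoid.mult = mul, one = tab_one n mul\<rparr>"

definition abtab :: "nat \<Rightarrow> (nat \<Rightarrow> nat \<Rightarrow> nat) \<Rightarrow> bool" where
  "abtab n mul \<longleftrightarrow> comm_group (tab_grp n mul)"

text \<open>Ask k i j queries the product i*j in the k-th input table (k = 0: G, k = 1: H);
each query costs one unit of time. An algorithm is a family of decision trees,
one for each input size n (the order of G).\<close>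

datatype 'o dtree = Leaf 'o | Ask nat nat nat "nat \<Rightarrow> 'o dtree"

primrec run :: "(nat \<Rightarrow> nat \<Rightarrow> nat \<Rightarrow> nat) \<Rightarrow> 'o dtree \<Rightarrow> 'o" where
  "run q (Leaf x) = x"
| "run q (Ask k i j f) = run q (f (q k i j))"

primrec cost :: "(nat \<Rightarrow> nat \<Rightarrow> nat \<Rightarrow> nat) \<Rightarrow> 'o dtree \<Rightarrow> nat" where
  "cost q (Leaf x) = 0"
| "cost q (Ask k i j f) = Suc (cost q (f (q k i j)))"

definition orc :: "nat \<Rightarrow> (nat \<Rightarrow> nat \<Rightarrow> nat) \<Rightarrow> nat \<Rightarrow> nat \<Rightarrow> nat \<Rightarrow> nat" where
  "orc n mul k i j = (if i < n \<and> j < n then mul i j else 0)"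

definition orc2 :: "nat \<Rightarrow> (nat \<Rightarrow> nat \<Rightarrow> nat) \<Rightarrow> (nat \<Rightarrow> nat \<Rightarrow> nat) \<Rightarrow> nat \<Rightarrow> nat \<Rightarrow> nat \<Rightarrow> nat" where
  "orc2 n mG mH k = (if k = 0 then orc n mG k else orc n mH k)"

text \<open>Worst-case running time not o(n), i.e. Omega(n) (lower bound sense):
there is c > 0 such that for infinitely many n some input of order n forces
at least c*n queries.\<close>

definition omega_lin :: "(nat \<Rightarrow> (nat \<Rightarrow> nat \<Rightarrow> nat \<Rightarrow> nat) set) \<Rightarrow> (nat \<Rightarrow> 'o dtree) \<Rightarrow> bool" where
  "omega_lin Inp A \<longleftrightarrow>
     (\<exists>c>0. \<exists>\<^sub>F n in sequentially. \<exists>q\<in>Inp n. c * real n \<le> real (cost q (A n)))"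

definition inputs1 :: "nat \<Rightarrow> (nat \<Rightarrow> nat \<Rightarrow> nat \<Rightarrow> nat) set" where
  "inputs1 n = {orc n mul | mul. abtab n mul}"

definition inputs2 :: "nat \<Rightarrow> (nat \<Rightarrow> nat \<Rightarrow> nat \<Rightarrow> nat) set" where
  "inputs2 n = {orc2 n mG mH | mG mH. abtab n mG \<and> abtab n mH}"

definition list_prod :: "('a, 'b) monoid_scheme \<Rightarrow> 'a list \<Rightarrow> 'a" where
  "list_prod G xs = foldr (\<lambda>x acc. x \<otimes>\<^bsub>G\<^esub> acc) xs \<one>\<^bsub>G\<^esub>"

definition internal_direct_product :: "('a, 'b) monoid_scheme \<Rightarrow> 'a set list \<Rightarrow> bool" where
  "internal_direct_product G Hs \<longleftrightarrow>
     (\<forall>H\<in>set Hs. subgroup H G) \<and>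
     bij_betw (list_prod G) {hs. length hs = length Hs \<and> (\<forall>i<length Hs. hs ! i \<in> Hs ! i)}
       (carrier G)"

definition is_basis :: "('a, 'b) monoid_scheme \<Rightarrow> 'a list \<Rightarrow> bool" where
  "is_basis G as \<longleftrightarrow> set as \<subseteq> carrier G \<and>
     (\<forall>a\<in>set as. generate G {a} \<noteq> {\<one>\<^bsub>G\<^esub>}) \<and>
     internal_direct_product G (map (\<lambda>a. generate G {a}) as)"

text \<open>A word is a list of (generator index, integer exponent); a relation is an
equation w1 = w2 between two words.\<close>

type_synonym word = "(nat \<times> int) list"
type_synonym relation = "word \<times> word"

definition eval_word :: "('a, 'b) monoid_scheme \<Rightarrow> 'a list \<Rightarrow> word \<Rightarrow> 'a" where
  "eval_word G gs w = list_prod G (map (\<lambda>(i, k). gs ! i [^]\<^bsub>G\<^esub> k) w)"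

definition expvec :: "nat \<Rightarrow> word \<Rightarrow> int list" where
  "expvec t w = map (\<lambda>i. sum_list (map snd (filter (\<lambda>p. fst p = i) w))) [0..<t]"

definition relvec :: "nat \<Rightarrow> relation \<Rightarrow> int list" where
  "relvec t r = map2 (-) (expvec t (fst r)) (expvec t (snd r))"

definition is_presentation :: "('a, 'b) monoid_scheme \<Rightarrow> 'a list \<Rightarrow> relation list \<Rightarrow> bool" where
  "is_presentation G gs rels \<longleftrightarrow>
     set gs \<subseteq> carrier G \<and> generate G (set gs) = carrier G \<and>
     (\<forall>r\<in>set rels. \<forall>(i, k)\<in>set (fst r) \<union> set (snd r). i < length gs) \<and>
     (\<forall>r\<in>set rels. eval_word G gs (fst r) = eval_word G gs (snd r)) \<and>
     (\<forall>v. length v = length gs \<and>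
          list_prod G (map (\<lambda>i. gs ! i [^]\<^bsub>G\<^esub> (v ! i)) [0..<length gs]) = \<one>\<^bsub>G\<^esub> \<longrightarrow>
          (\<exists>cs. length cs = length rels \<and>
             (\<forall>i<length gs. v ! i = (\<Sum>j<length rels. cs ! j * relvec (length gs) (rels ! j) ! i))))"

fun bitlen :: "nat \<Rightarrow> nat" where
  "bitlen m = (if m < 2 then 1 else Suc (bitlen (m div 2)))"

definition word_size :: "word \<Rightarrow> nat" where
  "word_size w = (\<Sum>(i, k)\<leftarrow>w. 1 + bitlen i + bitlen (nat \<bar>k\<bar>))"

definition rels_size :: "relation list \<Rightarrow> nat" where
  "rels_size rels = (\<Sum>r\<leftarrow>rels. 1 + word_size (fst r) + word_size (snd r))"

end

theory Submission
  imports Defs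
begin

definition rel :: "nat \<Rightarrow> (nat \<Rightarrow> nat) \<Rightarrow> (nat \<Rightarrow> nat \<Rightarrow> nat) \<Rightarrow> nat \<Rightarrow> nat \<Rightarrow> nat" where
  "rel n \<sigma> op a b = inv_into {..<n} \<sigma> (op (\<sigma> a) (\<sigma> b))"

lemma tab_one_eq:
  assumes "e < n" "\<And>x. x < n \<Longrightarrow> mul e x = x" "\<And>x. x < n \<Longrightarrow> mul x e = x"
    "\<And>x y. x < n \<Longrightarrow> y < n \<Longrightarrow> mul x y = mul y x"
  shows "tab_one n mul = e"
  unfolding tab_one_def
proof (rule the_equality)
  show "e < n \<and> (\<forall>x<n. mul e x = x)" using assms by auto
next
  fix e' assume "e' < n \<and> (\<forall>x<n. mul e' x = x)"
  then have "mul e' e = e" "e' < n" using assms(1) by auto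
  then show "e' = e" using assms(2,4) assms(1) by metis
qed

lemma abtabI:
  assumes cl: "\<And>x y. x < n \<Longrightarrow> y < n \<Longrightarrow> mul x y < n"
    and asc: "\<And>x y z. x < n \<Longrightarrow> y < n \<Longrightarrow> z < n \<Longrightarrow> mul (mul x y) z = mul x (mul y z)"
    and cm: "\<And>x y. x < n \<Longrightarrow> y < n \<Longrightarrow> mul x y = mul y x"
    and e: "e < n" "\<And>x. x < n \<Longrightarrow> mul e x = x"
    and iv: "\<And>x. x < n \<Longrightarrow> \<exists>y<n. mul y x = e"
  shows "abtab n mul"
proof -
  have one: "tab_one n mul = e"
    by (rule tab_one_eq) (use e cm in auto)
  show ?thesis unfolding abtab_def
  proof (rule comm_groupI, goal_cases)
    case 1 then show ?case using cl by (auto simp: tab_grp_def)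
  next
    case 2 then show ?case using e by (auto simp: tab_grp_def one)
  next
    case 3 then show ?case using asc by (auto simp: tab_grp_def)
  next
    case 4 then show ?case using cm by (auto simp: tab_grp_def)
  next
    case 5 then show ?case using e by (auto simp: tab_grp_def one)
  next
    case (6 x) then show ?case using iv[of x] by (auto simp: tab_grp_def one)
  qed
qed

lemma abtabD:
  assumes "abtab n mul"
  shows "\<And>x y. x < n \<Longrightarrow> y < n \<Longrightarrow> mul x y < n"
    and "\<And>x y z. x < n \<Longrightarrow> y < n \<Longrightarrow> z < n \<Longrightarrow> mul (mul x y) z = mul x (mul y z)"
    and "\<And>x y. x < n \<Longrightarrow> y < n \<Longrightarrow> mul x y = mul y x"
    and "tab_one n mul < n" "\<And>x. x < n \<Longrightarrow> mul (tab_one n mul) x = x"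
    and "\<And>x. x < n \<Longrightarrow> \<exists>y<n. mul y x = tab_one n mul"
proof -
  interpret comm_group "tab_grp n mul" using assms by (simp add: abtab_def)
  have c: "carrier (tab_grp n mul) = {..<n}" and m: "\<And>x y. x \<otimes>\<^bsub>tab_grp n mul\<^esub> y = mul x y"
    and o: "\<one>\<^bsub>tab_grp n mul\<^esub> = tab_one n mul" by (auto simp: tab_grp_def)
  show "\<And>x y. x < n \<Longrightarrow> y < n \<Longrightarrow> mul x y < n" using m_closed c m by (metis lessThan_iff)
  show "\<And>x y z. x < n \<Longrightarrow> y < n \<Longrightarrow> z < n \<Longrightarrow> mul (mul x y) z = mul x (mul y z)"
    using m_assoc c m by (metis lessThan_iff)
  show "\<And>x y. x < n \<Longrightarrow> y < n \<Longrightarrow> mul x y = mul y x" using m_comm c m by (metis lessThan_iff)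
  show "tab_one n mul < n" using one_closed c o by (metis lessThan_iff)
  show "\<And>x. x < n \<Longrightarrow> mul (tab_one n mul) x = x" using l_one c m o by (metis lessThan_iff)
  show "\<And>x. x < n \<Longrightarrow> \<exists>y<n. mul y x = tab_one n mul"
    using l_inv_ex c m o by (metis lessThan_iff)
qed

lemma rel_props:
  assumes "abtab n op" "bij_betw \<sigma> {..<n} {..<n}"
  shows "abtab n (rel n \<sigma> op)" "\<sigma> \<in> iso (tab_grp n (rel n \<sigma> op)) (tab_grp n op)"
proof -
  note D = abtabD[OF assms(1)]
  let ?t = "inv_into {..<n} \<sigma>"
  have inj: "inj_on \<sigma> {..<n}" and im: "\<sigma> ` {..<n} = {..<n}" using assms(2) by (auto simp: bij_betw_def)
  have s1: "\<And>x. x < n \<Longrightarrow> \<sigma> x < n" using im by auto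
  have t1: "\<And>y. y < n \<Longrightarrow> ?t y < n" using im by (metis inv_into_into lessThan_iff)
  have st: "\<And>y. y < n \<Longrightarrow> \<sigma> (?t y) = y" using im by (metis f_inv_into_f lessThan_iff)
  have ts: "\<And>x. x < n \<Longrightarrow> ?t (\<sigma> x) = x" using inj by (simp add: inv_into_f_f)
  have srel: "\<And>x y. x < n \<Longrightarrow> y < n \<Longrightarrow> \<sigma> (rel n \<sigma> op x y) = op (\<sigma> x) (\<sigma> y)"
    unfolding rel_def using st s1 D(1) by auto
  show "abtab n (rel n \<sigma> op)"
  proof (rule abtabI[where e = "?t (tab_one n op)"])
    show "\<And>x y. x < n \<Longrightarrow> y < n \<Longrightarrow> rel n \<sigma> op x y < n" unfolding rel_def using t1 s1 D(1) by auto
    show "\<And>x y z. x < n \<Longrightarrow> y < n \<Longrightarrow> z < n \<Longrightarrow> rel n \<sigma> op (rel n \<sigma> op x y) z = rel n \<sigma> op x (rel n \<sigma> op y z)"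
      unfolding rel_def using t1 s1 st D(1,2) by auto
    show "\<And>x y. x < n \<Longrightarrow> y < n \<Longrightarrow> rel n \<sigma> op x y = rel n \<sigma> op y x" unfolding rel_def using s1 D(3) by auto
    show "?t (tab_one n op) < n" using t1 D(4) by auto
    show "\<And>x. x < n \<Longrightarrow> rel n \<sigma> op (?t (tab_one n op)) x = x" unfolding rel_def using st s1 ts D(4,5) by auto
    show "\<exists>y<n. rel n \<sigma> op y x = ?t (tab_one n op)" if xn: "x < n" for x
    proof -
      obtain y where "y < n" "op y (\<sigma> x) = tab_one n op" using D(6)[OF s1[OF xn]] by blast
      then show ?thesis unfolding rel_def using t1 st by (intro exI[of _ "?t y"]) auto
    qed
  qed
  show "\<sigma> \<in> iso (tab_grp n (rel n \<sigma> op)) (tab_grp n op)"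
    unfolding iso_def hom_def using assms(2) s1 srel by (auto simp: tab_grp_def)
qed

definition addn :: "nat \<Rightarrow> nat \<Rightarrow> nat \<Rightarrow> nat" where
  "addn n a b = (a + b) mod n"

definition op1 :: "nat \<Rightarrow> nat \<Rightarrow> nat \<Rightarrow> nat" where
  "op1 m a b = 2 * ((a div 2 + b div 2) mod (2 * m)) + (a mod 2 + b mod 2) mod 2"

lemma addn_one: "0 < n \<Longrightarrow> tab_one n (addn n) = 0"
  by (rule tab_one_eq) (auto simp: addn_def add.commute)

lemma addn_abtab: "0 < n \<Longrightarrow> abtab n (addn n)"
proof (rule abtabI[where e = 0])
  assume n: "0 < n"
  show "\<And>x y. x < n \<Longrightarrow> y < n \<Longrightarrow> addn n x y < n" using n by (auto simp: addn_def)
  show "\<And>x y z. x < n \<Longrightarrow> y < n \<Longrightarrow> z < n \<Longrightarrow> addn n (addn n x y) z = addn n x (addn n y z)"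
    by (simp add: addn_def mod_add_left_eq mod_add_right_eq add.assoc)
  show "\<And>x y. x < n \<Longrightarrow> y < n \<Longrightarrow> addn n x y = addn n y x" by (simp add: addn_def add.commute)
  show "0 < n" by fact
  show "\<And>x. x < n \<Longrightarrow> addn n 0 x = x" by (simp add: addn_def)
  show "\<exists>y<n. addn n y x = 0" if "x < n" for x
    using n that by (intro exI[of _ "(n - x) mod n"]) (auto simp: addn_def mod_add_left_eq)
qed

lemma op1_div: "op1 m a b div 2 = (a div 2 + b div 2) mod (2 * m)"
  unfolding op1_def by simp

lemma op1_mod: "op1 m a b mod 2 = (a mod 2 + b mod 2) mod 2"
  unfolding op1_def by simp

lemma op1_lt: assumes "0 < m" shows "op1 m a b < 4 * m"
proof -
  have "(a div 2 + b div 2) mod (2 * m) \<le> 2 * m - 1" using assms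
    by (metis Suc_pred' less_Suc_eq_le mod_less_divisor mult_pos_pos zero_less_numeral)
  moreover have "(a mod 2 + b mod 2) mod 2 \<le> 1" by simp
  ultimately show ?thesis unfolding op1_def using assms by linarith
qed

lemma op1_eq: "x = 2 * (x div 2) + x mod 2" for x :: nat by simp

lemma op1_ext: "a div 2 = b div 2 \<Longrightarrow> a mod 2 = b mod 2 \<Longrightarrow> a = (b::nat)"
  by (metis div_mult_mod_eq)

lemma op1_one: "0 < m \<Longrightarrow> tab_one (4*m) (op1 m) = 0"
  by (rule tab_one_eq) (auto simp: op1_def add.commute intro!: op1_ext)

lemma op1_abtab: assumes m: "0 < m" shows "abtab (4*m) (op1 m)"
proof (rule abtabI[where e = 0])
  show "\<And>x y. x < 4*m \<Longrightarrow> y < 4*m \<Longrightarrow> op1 m x y < 4*m" using op1_lt m by auto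
  show "\<And>x y z. x < 4*m \<Longrightarrow> y < 4*m \<Longrightarrow> z < 4*m \<Longrightarrow> op1 m (op1 m x y) z = op1 m x (op1 m y z)"
    by (rule op1_ext) (simp_all add: op1_div op1_mod mod_add_left_eq mod_add_right_eq add.assoc)
  show "\<And>x y. x < 4*m \<Longrightarrow> y < 4*m \<Longrightarrow> op1 m x y = op1 m y x" by (simp add: op1_def add.commute)
  show "0 < 4*m" using m by simp
  show "\<And>x. x < 4*m \<Longrightarrow> op1 m 0 x = x" by (rule op1_ext) (auto simp: op1_div op1_mod)
  show "\<exists>y<4*m. op1 m y x = 0" if x: "x < 4*m" for x
  proof (intro exI[of _ "2 * ((2*m - x div 2) mod (2*m)) + x mod 2"] conjI)
    have "(2*m - x div 2) mod (2*m) \<le> 2 * m - 1" using m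
      by (metis Suc_pred' less_Suc_eq_le mod_less_divisor mult_pos_pos zero_less_numeral)
    moreover have "x mod 2 \<le> 1" by simp
    ultimately show "2 * ((2*m - x div 2) mod (2*m)) + x mod 2 < 4*m" using m by linarith
    have xd: "x div 2 < 2 * m" using x by linarith
    show "op1 m (2 * ((2*m - x div 2) mod (2*m)) + x mod 2) x = 0"
      unfolding op1_def using xd by (simp add: mod_add_left_eq)
  qed
qed

lemma op1_pow: assumes m: "0 < m" and x: "x < 4*m"
  shows "x [^]\<^bsub>tab_grp (4*m) (op1 m)\<^esub> (k::nat) = 2 * ((k * (x div 2)) mod (2*m)) + (k * (x mod 2)) mod 2"
proof (induction k)
  case 0 then show ?case using op1_one[OF m] by (simp add: tab_grp_def)
next
  case (Suc k)
  have e: "x [^]\<^bsub>tab_grp (4*m) (op1 m)\<^esub> Suc k = op1 m (x [^]\<^bsub>tab_grp (4*m) (op1 m)\<^esub> k) x"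
    by (simp add: tab_grp_def)
  show ?case unfolding e Suc.IH
    by (rule op1_ext) (simp_all add: op1_div op1_mod mod_add_left_eq mod_add_right_eq add.commute)
qed

lemma addn_pow: assumes "1 < n"
  shows "1 [^]\<^bsub>tab_grp n (addn n)\<^esub> (k::nat) = k mod n"
proof (induction k)
  case 0 then show ?case using addn_one[of n] assms by (simp add: tab_grp_def)
next
  case (Suc k)
  then show ?case by (simp add: tab_grp_def addn_def mod_add_left_eq)
qed

definition Qo :: "nat \<Rightarrow> nat set \<Rightarrow> (nat\<Rightarrow>nat\<Rightarrow>nat\<Rightarrow>nat) \<Rightarrow> (nat\<Rightarrow>nat) \<Rightarrow> (nat\<Rightarrow>nat\<Rightarrow>nat) \<Rightarrow> nat\<Rightarrow>nat\<Rightarrow>nat\<Rightarrow>nat" where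
 "Qo n FK fx \<sigma> op k i j = (if k \<in> FK then fx k i j else orc n (rel n \<sigma> op) k i j)"

lemma ext_bij:
  assumes "finite D" "D \<subseteq> {..<n}" "inj_on f D" "f ` D \<subseteq> {..<n}"
  shows "\<exists>\<sigma>. bij_betw \<sigma> {..<n} {..<(n::nat)} \<and> (\<forall>x\<in>D. \<sigma> x = f x)"
proof -
  have cD: "card (f ` D) = card D" using assms(3) by (simp add: card_image)
  have "card ({..<n} - D) = n - card D" using assms(1,2) by (simp add: card_Diff_subset)
  moreover have "card ({..<n} - f ` D) = n - card (f ` D)" using assms(1,4) by (simp add: card_Diff_subset)
  ultimately have "card ({..<n} - D) = card ({..<n} - f ` D)" using cD by simp
  then obtain g where g: "bij_betw g ({..<n} - D) ({..<n} - f ` D)"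
    using finite_same_card_bij[of "{..<n} - D" "{..<n} - f ` D"] by auto
  define \<sigma> where "\<sigma> = (\<lambda>x. if x \<in> D then f x else g x)"
  have b0: "bij_betw f D (f ` D)" using assms(3) by (rule inj_on_imp_bij_betw)
  have b1: "bij_betw \<sigma> D (f ` D)"
    using b0 by (rule bij_betw_cong[THEN iffD1, rotated]) (simp add: \<sigma>_def)
  have b2: "bij_betw \<sigma> ({..<n} - D) ({..<n} - f ` D)"
    using g by (rule bij_betw_cong[THEN iffD1, rotated]) (simp add: \<sigma>_def)
  have "bij_betw \<sigma> (D \<union> ({..<n} - D)) (f ` D \<union> ({..<n} - f ` D))"
    by (rule bij_betw_combine[OF b1 b2]) blast
  moreover have "D \<union> ({..<n} - D) = {..<n}" "f ` D \<union> ({..<n} - f ` D) = {..<n}" using assms(2,4) by blast+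
  moreover have "\<forall>x\<in>D. \<sigma> x = f x" by (simp add: \<sigma>_def)
  ultimately show ?thesis by metis
qed

lemma ext_set:
  assumes "finite D" "inj_on f D" "f ` D \<subseteq> V" "finite E" "finite V" "card D + card E \<le> card V"
  shows "\<exists>f'. inj_on f' (D \<union> E) \<and> f' ` (D \<union> E) \<subseteq> V \<and> (\<forall>x\<in>D. f' x = f x)"
proof -
  have "card (E - D) \<le> card E" using assms(4) by (simp add: card_mono)
  also have "\<dots> \<le> card V - card D" using assms(6) by simp
  also have "card V - card D = card (V - f ` D)"
    using assms(1,2,3) by (simp add: card_Diff_subset card_image)
  finally obtain g where g: "g ` (E - D) \<subseteq> V - f ` D" "inj_on g (E - D)"
    using card_le_inj[of "E - D" "V - f ` D"] assms by auto
  define f' where "f' = (\<lambda>x. if x \<in> D then f x else g x)"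
  have "inj_on f' (D \<union> E)"
  proof (rule inj_onI)
    fix x y assume xy: "x \<in> D \<union> E" "y \<in> D \<union> E" "f' x = f' y"
    show "x = y"
    proof (cases "x \<in> D"; cases "y \<in> D")
      assume "x \<in> D" "y \<in> D" then show ?thesis using xy assms(2) by (auto simp: f'_def inj_on_def)
    next
      assume a: "x \<in> D" "y \<notin> D"
      then have "g y \<in> V - f ` D" using g xy by auto
      moreover have "f x = g y" using a xy(3) by (simp add: f'_def)
      ultimately show ?thesis using a(1) by (metis DiffD2 imageI)
    next
      assume a: "x \<notin> D" "y \<in> D"
      then have "g x \<in> V - f ` D" using g xy by auto
      moreover have "g x = f y" using a xy(3) by (simp add: f'_def)
      ultimately show ?thesis using a(2) by (metis DiffD2 imageI)
    next
      assume a: "x \<notin> D" "y \<notin> D"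
      then have "g x = g y" using xy(3) by (simp add: f'_def)
      moreover have "x \<in> E - D" "y \<in> E - D" using a xy(1,2) by auto
      ultimately show ?thesis using g(2) by (meson inj_onD)
    qed
  qed
  moreover have "f' ` (D \<union> E) \<subseteq> V"
  proof (rule image_subsetI)
    fix x assume "x \<in> D \<union> E"
    then show "f' x \<in> V" using g(1) assms(3) by (cases "x \<in> D") (auto simp: f'_def)
  qed
  moreover have "\<forall>x\<in>D. f' x = f x" by (simp add: f'_def)
  ultimately show ?thesis by blast
qed

lemma Qo_val:
  assumes "bij_betw \<sigma> {..<n} {..<n}" "i < n" "j < n" "k \<notin> FK" "\<sigma> i = u" "\<sigma> j = v"
    "op u v = w" "\<sigma> a = w" "a < n"
  shows "Qo n FK fx \<sigma> op k i j = a"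
proof -
  have inj: "inj_on \<sigma> {..<n}" using assms(1) by (simp add: bij_betw_def)
  show ?thesis unfolding Qo_def orc_def rel_def using assms inj by (simp add: inv_into_f_eq)
qed

lemma add_point:
  assumes fin: "finite D1" and sub: "D1 \<subseteq> {..<n}" and inj: "inj_on f1 D1" and im: "f1 ` D1 \<subseteq> V"
    and wV: "w \<in> V" and cn: "card D1 < (n::nat)"
  shows "\<exists>a D2 f2. a < n \<and> a \<in> D2 \<and> f2 a = w \<and> D1 \<subseteq> D2 \<and> D2 \<subseteq> {..<n} \<and> finite D2 \<and>
      inj_on f2 D2 \<and> f2 ` D2 \<subseteq> V \<and> (\<forall>x\<in>D1. f2 x = f1 x) \<and> card D2 \<le> card D1 + 1"
proof (cases "\<exists>a\<in>D1. f1 a = w")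
  case True
  then obtain a where a: "a \<in> D1" "f1 a = w" by blast
  have an: "a < n" using a(1) sub by blast
  show ?thesis
  proof (intro exI[of _ a] exI[of _ D1] exI[of _ f1] conjI)
    show "card D1 \<le> card D1 + 1" by simp
  qed (use an a fin sub inj im in auto)
next
  case False
  have "\<not> {..<n} \<subseteq> D1"
  proof
    assume "{..<n} \<subseteq> D1"
    then have "card {..<n} \<le> card D1" using card_mono[OF fin] by blast
    then show False using cn by simp
  qed
  then obtain a where a: "a < n" "a \<notin> D1" by auto
  define f2 where "f2 = f1(a := w)"
  have agr: "\<forall>x\<in>D1. f2 x = f1 x" using a(2) unfolding f2_def by auto
  have i2: "inj_on f2 (insert a D1)"
  proof (rule inj_onI)
    fix x y assume xy: "x \<in> insert a D1" "y \<in> insert a D1" "f2 x = f2 y"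
    show "x = y"
    proof (cases "x = a"; cases "y = a")
      assume "x \<noteq> a" "y \<noteq> a"
      then have "x \<in> D1" "y \<in> D1" "f1 x = f1 y" using xy unfolding f2_def by auto
      then show ?thesis using inj by (meson inj_onD)
    next
      assume "x = a" "y \<noteq> a"
      then have "y \<in> D1" "f1 y = w" using xy unfolding f2_def by auto
      then show ?thesis using False by blast
    next
      assume "x \<noteq> a" "y = a"
      then have "x \<in> D1" "f1 x = w" using xy unfolding f2_def by auto
      then show ?thesis using False by blast
    qed simp
  qed
  have im2: "f2 ` insert a D1 \<subseteq> V" using im wV agr unfolding f2_def by auto
  have c2: "card (insert a D1) \<le> card D1 + 1" using a(2) fin by simp
  show ?thesis
  proof (intro exI[of _ a] exI[of _ "insert a D1"] exI[of _ f2] conjI)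
    show "f2 a = w" unfolding f2_def by simp
  qed (use a fin sub i2 im2 agr c2 in auto)
qed

lemma adversary:
  fixes t :: "'o dtree" and outl :: "'o \<Rightarrow> nat set"
  assumes V: "V \<subseteq> {..<n}" and agree: "\<And>a b. a \<in> V \<Longrightarrow> b \<in> V \<Longrightarrow> opA a b = opB a b \<and> opB a b \<in> V"
  shows "finite D \<Longrightarrow> D \<subseteq> {..<n} \<Longrightarrow> inj_on f D \<Longrightarrow> f ` D \<subseteq> V \<Longrightarrow> card D + 3*K + L \<le> card V \<Longrightarrow>
   \<exists>\<sigma>. bij_betw \<sigma> {..<n} {..<n} \<and> (\<forall>x\<in>D. \<sigma> x = f x) \<and>
     (K \<le> cost (Qo n FK fx \<sigma> opA) t \<or>
      (run (Qo n FK fx \<sigma> opA) t = run (Qo n FK fx \<sigma> opB) t \<and>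
       (finite (outl (run (Qo n FK fx \<sigma> opA) t)) \<and> card (outl (run (Qo n FK fx \<sigma> opA) t)) \<le> L \<longrightarrow>
          \<sigma> ` (outl (run (Qo n FK fx \<sigma> opA) t) \<inter> {..<n}) \<subseteq> V)))"
proof (induction t arbitrary: D f K)
  have finV: "finite V" using V finite_subset by blast
  case (Leaf r)
  show ?case
  proof (cases "finite (outl r) \<and> card (outl r) \<le> L")
    case True
    let ?E = "outl r \<inter> {..<n}"
    have "card ?E \<le> L" using True card_mono[of "outl r" ?E] by auto
    then have "card D + card ?E \<le> card V" using Leaf.prems by linarith
    then obtain f' where f': "inj_on f' (D \<union> ?E)" "f' ` (D \<union> ?E) \<subseteq> V" "\<forall>x\<in>D. f' x = f x"
      using ext_set[of D f V ?E] Leaf.prems finV by auto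
    obtain \<sigma> where s: "bij_betw \<sigma> {..<n} {..<n}" "\<forall>x\<in>D \<union> ?E. \<sigma> x = f' x"
    proof -
      have "f' ` (D \<union> ?E) \<subseteq> {..<n}" using f'(2) V by blast
      moreover have "finite (D \<union> ?E)" "D \<union> ?E \<subseteq> {..<n}" using Leaf.prems by auto
      ultimately show ?thesis using ext_bij[of "D \<union> ?E" n f'] f'(1) that by blast
    qed
    have "\<sigma> ` ?E \<subseteq> V" using s(2) f'(2) by auto
    then show ?thesis using s f'(3) by (intro exI[of _ \<sigma>]) auto
  next
    case False
    obtain \<sigma> where s: "bij_betw \<sigma> {..<n} {..<n}" "\<forall>x\<in>D. \<sigma> x = f x"
      using ext_bij[of D n f] Leaf.prems V by auto
    then show ?thesis using False by (intro exI[of _ \<sigma>]) auto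
  qed
next
  case (Ask k i j g)
  note prems = Ask.prems
  have finV: "finite V" using V finite_subset by blast
  have cV: "card V \<le> n" using V card_mono[of "{..<n}" V] by auto
  show ?case
  proof (cases K)
    case 0
    obtain \<sigma> where s: "bij_betw \<sigma> {..<n} {..<n}" "\<forall>x\<in>D. \<sigma> x = f x"
      using ext_bij[of D n f] prems V by auto
    then show ?thesis using 0 by (intro exI[of _ \<sigma>]) auto
  next
    case (Suc K')
    have key: "\<exists>a D2 f2. finite D2 \<and> D \<subseteq> D2 \<and> D2 \<subseteq> {..<n} \<and> inj_on f2 D2 \<and> f2 ` D2 \<subseteq> V \<and>
        (\<forall>x\<in>D. f2 x = f x) \<and> card D2 \<le> card D + 3 \<and>
        (\<forall>\<sigma>. bij_betw \<sigma> {..<n} {..<n} \<longrightarrow> (\<forall>x\<in>D2. \<sigma> x = f2 x) \<longrightarrow>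
           Qo n FK fx \<sigma> opA k i j = a \<and> Qo n FK fx \<sigma> opB k i j = a)"
    proof (cases "k \<in> FK")
      case True
      show ?thesis
      proof (rule exI[of _ "fx k i j"], rule exI[of _ D], rule exI[of _ f], intro conjI allI impI)
      qed (use prems True in \<open>auto simp: Qo_def\<close>)
    next
      case kF: False
      show ?thesis
      proof (cases "i < n \<and> j < n")
        case False
        show ?thesis
        proof (rule exI[of _ 0], rule exI[of _ D], rule exI[of _ f], intro conjI allI impI)
        qed (use prems kF False in \<open>auto simp: Qo_def orc_def\<close>)
      next
        case ij: True
        let ?D1 = "D \<union> {i, j}"
        have c2: "card {i, j} \<le> 2" by (cases "i = j") auto
        have cD1: "card ?D1 \<le> card D + 2" using card_Un_le[of D "{i,j}"] c2 by linarith
        have "card D + card {i, j} \<le> card V" using prems(5) Suc c2 by linarith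
        moreover have "finite {i,j}" by simp
        ultimately obtain f1 where f1: "inj_on f1 ?D1" "f1 ` ?D1 \<subseteq> V" "\<forall>x\<in>D. f1 x = f x"
          using ext_set[of D f V "{i,j}"] prems(1,3,4) finV by blast
        define w where "w = opB (f1 i) (f1 j)"
        have fiV: "f1 i \<in> V" "f1 j \<in> V" using f1(2) by auto
        have wV: "w \<in> V" and wA: "opA (f1 i) (f1 j) = w" using agree[OF fiV] by (auto simp: w_def)
        have finD1: "finite ?D1" "?D1 \<subseteq> {..<n}" using prems ij by auto
        have "card ?D1 < n" using cD1 prems(5) Suc cV by linarith
        then have "\<exists>a D2 f2. a < n \<and> a \<in> D2 \<and> f2 a = w \<and> ?D1 \<subseteq> D2 \<and> D2 \<subseteq> {..<n} \<and> finite D2 \<and>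
            inj_on f2 D2 \<and> f2 ` D2 \<subseteq> V \<and> (\<forall>x\<in>?D1. f2 x = f1 x) \<and> card D2 \<le> card ?D1 + 1"
          using add_point[OF finD1 f1(1,2) wV] by blast
        then obtain a D2 f2 where d2: "a < n" "a \<in> D2" "f2 a = w" "?D1 \<subseteq> D2" "D2 \<subseteq> {..<n}" "finite D2"
            "inj_on f2 D2" "f2 ` D2 \<subseteq> V" "\<forall>x\<in>?D1. f2 x = f1 x" "card D2 \<le> card ?D1 + 1"
          by blast
        have "\<forall>\<sigma>. bij_betw \<sigma> {..<n} {..<n} \<longrightarrow> (\<forall>x\<in>D2. \<sigma> x = f2 x) \<longrightarrow>
           Qo n FK fx \<sigma> opA k i j = a \<and> Qo n FK fx \<sigma> opB k i j = a"
        proof (intro allI impI)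
          fix \<sigma> assume s: "bij_betw \<sigma> {..<n} {..<n}" "\<forall>x\<in>D2. \<sigma> x = f2 x"
          have "\<sigma> i = f1 i" "\<sigma> j = f1 j" "\<sigma> a = w" using s(2) d2(2,3,4,9) by auto
          then show "Qo n FK fx \<sigma> opA k i j = a \<and> Qo n FK fx \<sigma> opB k i j = a"
            using Qo_val[OF s(1), of i j k FK "f1 i" "f1 j" opA w a fx]
              Qo_val[OF s(1), of i j k FK "f1 i" "f1 j" opB w a fx] ij kF wA w_def d2(1) by auto
        qed
        moreover have "D \<subseteq> D2" using d2(4) by blast
        moreover have "\<forall>x\<in>D. f2 x = f x" using d2(4,9) f1(3) by auto
        moreover have "card D2 \<le> card D + 3" using d2(10) cD1 by linarith
        ultimately show ?thesis
          using d2(5-8)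
            by - (intro exI[of _ a] exI[of _ D2] exI[of _ f2] conjI; (assumption | simp (no_asm)))
      qed
    qed
    then obtain a D2 f2 where d: "finite D2" "D \<subseteq> D2" "D2 \<subseteq> {..<n}" "inj_on f2 D2" "f2 ` D2 \<subseteq> V"
        "\<forall>x\<in>D. f2 x = f x" "card D2 \<le> card D + 3"
        "\<And>\<sigma>. bij_betw \<sigma> {..<n} {..<n} \<Longrightarrow> (\<forall>x\<in>D2. \<sigma> x = f2 x) \<Longrightarrow>
           Qo n FK fx \<sigma> opA k i j = a \<and> Qo n FK fx \<sigma> opB k i j = a"
      by blast
    have "card D2 + 3*K' + L \<le> card V" using d(7) prems(5) Suc by linarith
    then obtain \<sigma> where s: "bij_betw \<sigma> {..<n} {..<n}" "\<forall>x\<in>D2. \<sigma> x = f2 x"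
       "K' \<le> cost (Qo n FK fx \<sigma> opA) (g a) \<or>
      (run (Qo n FK fx \<sigma> opA) (g a) = run (Qo n FK fx \<sigma> opB) (g a) \<and>
       (finite (outl (run (Qo n FK fx \<sigma> opA) (g a))) \<and> card (outl (run (Qo n FK fx \<sigma> opA) (g a))) \<le> L \<longrightarrow>
          \<sigma> ` (outl (run (Qo n FK fx \<sigma> opA) (g a)) \<inter> {..<n}) \<subseteq> V))"
      using Ask.IH[of "g a" D2 f2 K'] d by blast
    have q: "Qo n FK fx \<sigma> opA k i j = a" "Qo n FK fx \<sigma> opB k i j = a" using d(8)[OF s(1,2)] by auto
    have "\<forall>x\<in>D. \<sigma> x = f x" using s(2) d(2,6) by auto
    then show ?thesis using s(1,3) q Suc by (intro exI[of _ \<sigma>]) auto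
  qed
qed

lemma Qo_orc2: "Qo n {0} (\<lambda>k. orc n mG k) \<sigma> op = orc2 n mG (rel n \<sigma> op)"
  by (simp add: fun_eq_iff Qo_def orc2_def orc_def)

lemma Qo_orc: "Qo n {} fx \<sigma> op = orc n (rel n \<sigma> op)"
  by (simp add: fun_eq_iff Qo_def)

lemma V_sub: "{x. x < 4*m \<and> even x} \<subseteq> {..<4*m}" by auto

lemma V_agree:
  assumes "a \<in> {x. x < 4*m \<and> even x}" "b \<in> {x. x < 4*m \<and> even x}"
  shows "op1 m a b = addn (4*m) a b \<and> addn (4*m) a b \<in> {x. x < 4*m \<and> even x}"
proof -
  obtain a' b' where ab: "a = 2*a'" "b = 2*b'" using assms by (auto elim!: evenE)
  have e1: "op1 m a b = 2 * ((a' + b') mod (2*m))" unfolding op1_def ab by simp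
  have e2: "(2*(a'+b')) mod (2*(2*m)) = 2 * ((a'+b') mod (2*m))" by (rule mod_mult_mult1)
  have e3: "addn (4*m) a b = (2*(a'+b')) mod (2*(2*m))" unfolding addn_def ab
    by (simp only: add_mult_distrib2 mult.assoc[symmetric]) simp
  have e: "op1 m a b = addn (4*m) a b" using e1 e2 e3 by simp
  have "even (op1 m a b)" unfolding op1_def ab by simp
  then have "even (addn (4*m) a b)" using e by simp
  moreover have "addn (4*m) a b < 4*m" using assms unfolding addn_def by auto
  ultimately show ?thesis using e by auto
qed

lemma V_card: "card {x. x < 4*m \<and> even x} = 2*m"
proof -
  have "{x. x < 4*m \<and> even x} = (\<lambda>y. 2*y) ` {..<2*m}" by (auto elim!: evenE)
  moreover have "inj_on (\<lambda>y. 2*y) {..<2*m}" by (auto simp: inj_on_def)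
  ultimately show ?thesis by (simp add: card_image)
qed

lemma noniso:
  assumes m: "0 < m" and s: "bij_betw \<sigma> {..<4*m} {..<4*m}"
  shows "\<not> (tab_grp (4*m) (addn (4*m)) \<cong> tab_grp (4*m) (rel (4*m) \<sigma> (op1 m)))"
proof
  assume "tab_grp (4*m) (addn (4*m)) \<cong> tab_grp (4*m) (rel (4*m) \<sigma> (op1 m))"
  then obtain h where h: "h \<in> iso (tab_grp (4*m) (addn (4*m))) (tab_grp (4*m) (rel (4*m) \<sigma> (op1 m)))"
    unfolding is_iso_def by auto
  have ab1: "abtab (4*m) (op1 m)" using op1_abtab[OF m] .
  have ab2: "abtab (4*m) (addn (4*m))" using addn_abtab m by simp
  have si: "\<sigma> \<in> iso (tab_grp (4*m) (rel (4*m) \<sigma> (op1 m))) (tab_grp (4*m) (op1 m))"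
    using rel_props(2)[OF ab1 s] .
  define g where "g = \<sigma> \<circ> h"
  have g: "g \<in> iso (tab_grp (4*m) (addn (4*m))) (tab_grp (4*m) (op1 m))"
    unfolding g_def using iso_set_trans[OF h si] .
  have G1: "group (tab_grp (4*m) (addn (4*m)))" using ab2 unfolding abtab_def comm_group_def by simp
  have G2: "group (tab_grp (4*m) (op1 m))" using ab1 unfolding abtab_def comm_group_def by simp
  have gh: "g \<in> hom (tab_grp (4*m) (addn (4*m))) (tab_grp (4*m) (op1 m))" using g by (simp add: iso_def)
  have ginj: "inj_on g {..<4*m}" using g by (simp add: iso_def bij_betw_def tab_grp_def)
  have one_c: "(1::nat) \<in> carrier (tab_grp (4*m) (addn (4*m)))" using m by (simp add: tab_grp_def)
  have g1: "g 1 < 4*m" using gh one_c by (auto simp: hom_def tab_grp_def)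
  have "g (1 [^]\<^bsub>tab_grp (4*m) (addn (4*m))\<^esub> (2*m)) = g 1 [^]\<^bsub>tab_grp (4*m) (op1 m)\<^esub> (2*m)"
    using hom_nat_pow[OF gh one_c G1 G2] .
  also have "\<dots> = 0" unfolding op1_pow[OF m g1] by simp
  finally have e1: "g (2*m) = 0" using addn_pow[of "4*m" "2*m"] m by simp
  have "g (1 [^]\<^bsub>tab_grp (4*m) (addn (4*m))\<^esub> (0::nat)) = g 1 [^]\<^bsub>tab_grp (4*m) (op1 m)\<^esub> (0::nat)"
    using hom_nat_pow[OF gh one_c G1 G2] .
  then have e0: "g 0 = 0" using addn_one[of "4*m"] op1_one[OF m] m by (simp add: tab_grp_def)
  have "2*m = (0::nat)" using inj_onD[OF ginj, of "2*m" 0] e1 e0 m by simp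
  then show False using m by simp
qed

lemma list_prod_in:
  assumes "subgroup H G" "set xs \<subseteq> H"
  shows "list_prod G xs \<in> H"
  using assms(2)
proof (induction xs)
  case Nil then show ?case using subgroup.one_closed[OF assms(1)] by (simp add: list_prod_def)
next
  case (Cons x xs)
  then show ?case using subgroup.m_closed[OF assms(1)] by (simp add: list_prod_def)
qed

lemma list_prod_ones:
  assumes "monoid G" "\<forall>x\<in>set xs. x = \<one>\<^bsub>G\<^esub>"
  shows "list_prod G xs = \<one>\<^bsub>G\<^esub>"
  using assms(2)
proof (induction xs)
  case Nil then show ?case by (simp add: list_prod_def)
next
  case (Cons x xs)
  then have "list_prod G xs = \<one>\<^bsub>G\<^esub>" "x = \<one>\<^bsub>G\<^esub>" by auto
  then show ?case using monoid.l_one[OF assms(1) monoid.one_closed[OF assms(1)]]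
    by (simp add: list_prod_def)
qed

lemma basis_gen:
  fixes G (structure)
  assumes G: "group G" and b: "is_basis G as"
  shows "generate G (set as) = carrier G"
proof
  interpret group G by fact
  have sub: "set as \<subseteq> carrier G" using b by (simp add: is_basis_def)
  show "generate G (set as) \<subseteq> carrier G" using generate_incl[OF sub] .
  show "carrier G \<subseteq> generate G (set as)"
  proof
    fix x assume x: "x \<in> carrier G"
    have bij: "bij_betw (list_prod G) {hs. length hs = length (map (\<lambda>a. generate G {a}) as) \<and>
        (\<forall>i<length (map (\<lambda>a. generate G {a}) as). hs ! i \<in> map (\<lambda>a. generate G {a}) as ! i)} (carrier G)"
      using b by (simp add: is_basis_def internal_direct_product_def)
    then obtain hs where hs: "length hs = length as" "\<forall>i<length as. hs ! i \<in> generate G {as ! i}"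
      "x = list_prod G hs"
      using x unfolding bij_betw_def by (force simp: image_iff)
    have "set hs \<subseteq> generate G (set as)"
    proof
      fix y assume "y \<in> set hs"
      then obtain i where i: "i < length hs" "y = hs ! i" by (auto simp: in_set_conv_nth)
      then have "y \<in> generate G {as ! i}" using hs by auto
      moreover have "{as ! i} \<subseteq> set as" using i hs(1) by auto
      ultimately show "y \<in> generate G (set as)" using mono_generate by blast
    qed
    then show "x \<in> generate G (set as)"
      using list_prod_in[OF generate_is_subgroup[OF sub]] hs(3) by simp
  qed
qed

lemma basis_len:
  fixes G (structure)
  assumes G: "group G" and fin: "finite (carrier G)" and b: "is_basis G as"
  shows "2 ^ length as \<le> card (carrier G)"
proof -
  interpret group G by fact
  define len where "len = length as"
  define T where "T = {hs. length hs = length (map (\<lambda>a. generate G {a}) as) \<and>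
        (\<forall>i<length (map (\<lambda>a. generate G {a}) as). hs ! i \<in> map (\<lambda>a. generate G {a}) as ! i)}"
  have bij: "bij_betw (list_prod G) T (carrier G)"
    using b by (simp add: is_basis_def internal_direct_product_def T_def)
  have finT: "finite T" using bij fin bij_betw_finite by blast
  have cT: "card T = card (carrier G)" using bij_betw_same_card[OF bij] .
  have sub: "set as \<subseteq> carrier G" using b by (simp add: is_basis_def)
  have g1: "generate G {\<one>} = {\<one>}"
  proof
    show "generate G {\<one>} \<subseteq> {\<one>}" using generate_subgroup_incl[OF _ triv_subgroup] by simp
    show "{\<one>} \<subseteq> generate G {\<one>}" using generate.one by blast
  qed
  have ne: "as ! i \<noteq> \<one>" if "i < len" for i
  proof
    assume "as ! i = \<one>"
    moreover have "as ! i \<in> set as" using that by (simp add: len_def)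
    ultimately show False using b g1 by (auto simp: is_basis_def)
  qed
  define \<phi> where "\<phi> = (\<lambda>S. map (\<lambda>i. if i \<in> S then as ! i else \<one>) [0..<len])"
  have im: "\<phi> ` Pow {..<len} \<subseteq> T"
  proof
    fix hs assume "hs \<in> \<phi> ` Pow {..<len}"
    then obtain S where S: "hs = \<phi> S" by blast
    have "hs ! i \<in> generate G {as ! i}" if "i < len" for i
      using that S generate.incl[of "as ! i" "{as ! i}" G] generate.one[of G "{as ! i}"]
      by (auto simp: \<phi>_def)
    then show "hs \<in> T" using S by (simp add: T_def \<phi>_def len_def)
  qed
  have inj: "inj_on \<phi> (Pow {..<len})"
  proof (rule inj_onI)
    fix S1 S2 assume S: "S1 \<in> Pow {..<len}" "S2 \<in> Pow {..<len}" "\<phi> S1 = \<phi> S2"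
    have "i \<in> S1 \<longleftrightarrow> i \<in> S2" if "i < len" for i
    proof -
      have "\<phi> S1 ! i = \<phi> S2 ! i" using S(3) by simp
      then have "(if i \<in> S1 then as ! i else \<one>) = (if i \<in> S2 then as ! i else \<one>)"
      proof -
        have u: "[0..<len] ! i = i" using that by (metis add.left_neutral nth_upt)
        have "\<phi> S1 ! i = (if i \<in> S1 then as ! i else \<one>)" "\<phi> S2 ! i = (if i \<in> S2 then as ! i else \<one>)"
          unfolding \<phi>_def using that u by simp_all
        then show ?thesis using \<open>\<phi> S1 ! i = \<phi> S2 ! i\<close> by simp
      qed
      then show ?thesis using ne[OF that] by (cases "i \<in> S1"; cases "i \<in> S2") auto
    qed
    then show "S1 = S2" using S(1,2) by auto
  qed
  have "2 ^ len = card (\<phi> ` Pow {..<len})" using inj by (simp add: card_image card_Pow)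
  also have "\<dots> \<le> card T" using card_mono[OF finT im] .
  finally show ?thesis using cT by (simp add: len_def)
qed

lemma word_size_ge: "length w \<le> word_size w"
  by (induction w) (auto simp: word_size_def split: prod.splits)

lemma concat_len_le:
  "length (concat (map (\<lambda>r. map fst (fst r) @ map fst (snd r)) rels)) \<le> rels_size rels"
proof (induction rels)
  case Nil then show ?case by (simp add: rels_size_def)
next
  case (Cons r rs)
  have "length (fst r) \<le> word_size (fst r)" "length (snd r) \<le> word_size (snd r)" using word_size_ge by auto
  then show ?case using Cons by (simp add: rels_size_def)
qed

lemma pres_len:
  fixes G (structure)
  assumes G: "group G" and fin: "finite (carrier G)" and ne: "carrier G \<noteq> {}"
    and p: "is_presentation G gs rels"
  shows "length gs \<le> rels_size rels"
proof -
  interpret group G by fact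
  define L where "L = length gs"
  define I where "I = set (concat (map (\<lambda>r. map fst (fst r) @ map fst (snd r)) rels))"
  have sub: "set gs \<subseteq> carrier G" using p by (simp add: is_presentation_def)
  have np: "0 < card (carrier G)" using fin ne by (simp add: card_gt_0_iff)
  have "i \<in> I" if i: "i < L" for i
  proof -
    define v where "v = map (\<lambda>l. if l = i then int (card (carrier G)) else 0) [0..<L]"
    have lv: "length v = length gs" by (simp add: v_def L_def)
    have ones: "\<forall>x\<in>set (map (\<lambda>l. gs ! l [^] (v ! l)) [0..<length gs]). x = \<one>"
    proof
      fix x assume "x \<in> set (map (\<lambda>l. gs ! l [^] (v ! l)) [0..<length gs])"
      then obtain l where l: "l < L" "x = gs ! l [^] (v ! l)" by (auto simp: L_def)
      have gl: "gs ! l \<in> carrier G" using sub l(1) by (auto simp: L_def)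
      show "x = \<one>"
      proof (cases "l = i")
        case True
        then have "x = gs ! l [^] (card (carrier G))" using l by (simp add: v_def int_pow_int)
        then show ?thesis using pow_order_eq_1[OF gl] by (simp add: Coset.order_def)
      next
        case False
        then show ?thesis using l by (simp add: v_def)
      qed
    qed
    have "list_prod G (map (\<lambda>l. gs ! l [^] (v ! l)) [0..<length gs]) = \<one>"
      using list_prod_ones[OF monoid_axioms ones] .
    then obtain cs where cs: "length cs = length rels"
      "\<forall>i<length gs. v ! i = (\<Sum>j<length rels. cs ! j * relvec (length gs) (rels ! j) ! i)"
      using p lv unfolding is_presentation_def by blast
    have vi: "v ! i = int (card (carrier G))" using i by (simp add: v_def nth_upt)
    have "(\<Sum>j<length rels. cs ! j * relvec L (rels ! j) ! i) = int (card (carrier G))"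
      using cs(2) i vi by (simp add: L_def)
    then have "(\<Sum>j<length rels. cs ! j * relvec L (rels ! j) ! i) \<noteq> 0" using np by simp
    then obtain j where j: "j < length rels" "relvec L (rels ! j) ! i \<noteq> 0"
      by (metis (no_types, lifting) lessThan_iff mult_zero_right sum.neutral)
    have "relvec L (rels ! j) ! i = expvec L (fst (rels ! j)) ! i - expvec L (snd (rels ! j)) ! i"
      using i by (simp add: relvec_def expvec_def)
    then have "expvec L (fst (rels ! j)) ! i \<noteq> 0 \<or> expvec L (snd (rels ! j)) ! i \<noteq> 0" using j by auto
    then have "filter (\<lambda>p. fst p = i) (fst (rels ! j)) \<noteq> [] \<or> filter (\<lambda>p. fst p = i) (snd (rels ! j)) \<noteq> []"
      using i by (auto simp: expvec_def)
    then have "i \<in> fst ` set (fst (rels ! j)) \<or> i \<in> fst ` set (snd (rels ! j))"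
      by (auto simp: filter_empty_conv)
    moreover have "rels ! j \<in> set rels" using j by simp
    ultimately show "i \<in> I" unfolding I_def by auto
  qed
  then have "{..<L} \<subseteq> I" by auto
  then have "L \<le> card I" using card_mono[of I "{..<L}"] by (simp add: I_def)
  also have "\<dots> \<le> length (concat (map (\<lambda>r. map fst (fst r) @ map fst (snd r)) rels))"
    unfolding I_def by (rule card_length)
  also have "\<dots> \<le> rels_size rels" by (rule concat_len_le)
  finally show ?thesis by (simp add: L_def)
qed

lemma gen_proper:
  assumes m: "0 < m" and s: "bij_betw \<sigma> {..<4*m} {..<4*m}"
    and S: "S \<subseteq> {..<4*m}" "\<sigma> ` S \<subseteq> {x. x < 4*m \<and> even x}"
  shows "generate (tab_grp (4*m) (rel (4*m) \<sigma> (addn (4*m)))) S \<noteq> {..<4*m}"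
proof
  define n where "n = 4*m"
  define G where "G = tab_grp n (rel n \<sigma> (addn n))"
  define H where "H = tab_grp n (addn n)"
  assume gen: "generate (tab_grp (4*m) (rel (4*m) \<sigma> (addn (4*m)))) S = {..<4*m}"
  have n0: "0 < n" "even n" "1 < n" using m by (auto simp: n_def)
  have abH: "abtab n (addn n)" using addn_abtab n0 by simp
  have s': "bij_betw \<sigma> {..<n} {..<n}" using s by (simp add: n_def)
  have abG: "abtab n (rel n \<sigma> (addn n))" using rel_props(1)[OF abH s'] .
  have si: "\<sigma> \<in> iso G H" using rel_props(2)[OF abH s'] by (simp add: G_def H_def)
  have gG: "group G" using abG unfolding abtab_def comm_group_def G_def by simp
  have gH: "group H" using abH unfolding abtab_def comm_group_def H_def by simp
  have hom: "group_hom G H \<sigma>" using si gG gH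
    unfolding group_hom_def group_hom_axioms_def iso_def by simp
  have cG: "carrier G = {..<n}" and cH: "carrier H = {..<n}" by (simp_all add: G_def H_def tab_grp_def)
  have oneH: "\<one>\<^bsub>H\<^esub> = 0" using addn_one[OF n0(1)] by (simp add: H_def tab_grp_def)
  have s1: "\<And>x. x < n \<Longrightarrow> \<sigma> x < n" using s' by (auto simp: bij_betw_def)
  define W where "W = {l. l < n \<and> even (\<sigma> l)}"
  have invH: "inv\<^bsub>H\<^esub> y = (n - y) mod n" if "y < n" for y
  proof (rule group.inv_equality[OF gH])
    show "(n - y) mod n \<otimes>\<^bsub>H\<^esub> y = \<one>\<^bsub>H\<^esub>" unfolding oneH using that
      by (simp add: H_def tab_grp_def addn_def mod_add_left_eq)
    show "y \<in> carrier H" using that cH by simp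
    show "(n - y) mod n \<in> carrier H" using cH n0 by simp
  qed
  have subW: "subgroup W G"
  proof (rule group.subgroupI[OF gG])
    show "W \<subseteq> carrier G" using cG by (auto simp: W_def)
    have "\<one>\<^bsub>G\<^esub> \<in> W"
    proof -
      have "\<sigma> \<one>\<^bsub>G\<^esub> = \<one>\<^bsub>H\<^esub>" using group_hom.hom_one[OF hom] .
      moreover have "\<one>\<^bsub>G\<^esub> < n" using group.subgroup_self[OF gG] cG
        by (metis gG group.is_monoid lessThan_iff monoid.one_closed)
      ultimately show ?thesis using oneH by (simp add: W_def)
    qed
    then show "W \<noteq> {}" by blast
    show "inv\<^bsub>G\<^esub> a \<in> W" if a: "a \<in> W" for a
    proof -
      have ac: "a \<in> carrier G" "a < n" "even (\<sigma> a)" using a cG by (auto simp: W_def)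
      have "\<sigma> (inv\<^bsub>G\<^esub> a) = inv\<^bsub>H\<^esub> (\<sigma> a)" using group_hom.hom_inv[OF hom ac(1)] .
      also have "\<dots> = (n - \<sigma> a) mod n" using invH s1 ac(2) by simp
      finally have "even (\<sigma> (inv\<^bsub>G\<^esub> a))" using ac(3) n0(2) by (simp add: dvd_mod)
      moreover have "inv\<^bsub>G\<^esub> a < n" using group.inv_closed[OF gG ac(1)] cG by simp
      ultimately show ?thesis by (simp add: W_def)
    qed
    show "a \<otimes>\<^bsub>G\<^esub> b \<in> W" if "a \<in> W" "b \<in> W" for a b
    proof -
      have ab: "a \<in> carrier G" "b \<in> carrier G" "even (\<sigma> a)" "even (\<sigma> b)" using that cG by (auto simp: W_def)
      have "\<sigma> (a \<otimes>\<^bsub>G\<^esub> b) = \<sigma> a \<otimes>\<^bsub>H\<^esub> \<sigma> b" using group_hom.hom_mult[OF hom ab(1,2)] .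
      also have "\<dots> = (\<sigma> a + \<sigma> b) mod n" by (simp add: H_def tab_grp_def addn_def)
      finally have "even (\<sigma> (a \<otimes>\<^bsub>G\<^esub> b))" using ab(3,4) n0(2) by (simp add: dvd_mod)
      moreover have "a \<otimes>\<^bsub>G\<^esub> b < n" using group.subgroup_self[OF gG] cG ab(1,2)
        by (metis gG group.is_monoid lessThan_iff monoid.m_closed)
      ultimately show ?thesis by (simp add: W_def)
    qed
  qed
  have "S \<subseteq> W" using S by (auto simp: W_def n_def)
  then have "generate G S \<subseteq> W" using group.generate_subgroup_incl[OF gG _ subW] by blast
  then have all: "{..<n} \<subseteq> W" using gen by (simp add: G_def n_def)
  have "1 \<in> \<sigma> ` {..<n}" using s' n0 by (simp add: bij_betw_def)
  then obtain l where l: "l < n" "\<sigma> l = 1" by auto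
  then have "l \<in> W" using all by auto
  then show False using l by (simp add: W_def)
qed

lemma pow8: "8 * k \<le> (8::nat) ^ k"
proof (induction k)
  case 0 then show ?case by simp
next
  case (Suc k)
  show ?case
  proof (cases "k = 0")
    case True then show ?thesis by simp
  next
    case False
    then have "8 \<le> (8::nat) ^ k" using power_increasing[of 1 k "8::nat"] by simp
    then show ?thesis using Suc.IH by simp
  qed
qed

lemma len_bound: assumes "2 ^ l \<le> 12 * k" "1 \<le> k" shows "l \<le> 3 * k"
proof (rule ccontr)
  assume "\<not> l \<le> 3 * k"
  then have "Suc (3 * k) \<le> l" by simp
  then have "(2::nat) ^ Suc (3 * k) \<le> 2 ^ l" by (rule power_increasing) simp
  moreover have "(2::nat) ^ Suc (3 * k) = 2 * 8 ^ k" by (simp add: power_mult)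
  moreover have "16 * k \<le> 2 * 8 ^ k" using pow8[of k] by simp
  ultimately show False using assms by linarith
qed

lemma part1:
  "\<forall>A :: nat \<Rightarrow> bool dtree.
        (\<forall>n mG mH. abtab n mG \<and> abtab n mH \<longrightarrow>
           (run (orc2 n mG mH) (A n) \<longleftrightarrow> tab_grp n mG \<cong> tab_grp n mH))
        \<longrightarrow> omega_lin inputs2 A"
proof (intro allI impI)
  fix A :: "nat \<Rightarrow> bool dtree"
  assume corr: "\<forall>n mG mH. abtab n mG \<and> abtab n mH \<longrightarrow>
           (run (orc2 n mG mH) (A n) \<longleftrightarrow> tab_grp n mG \<cong> tab_grp n mH)"
  show "omega_lin inputs2 A" unfolding omega_lin_def frequently_sequentially
  proof (intro exI[of _ "1/12::real"] conjI allI)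
    show "(0::real) < 1/12" by simp
    fix N :: nat
    define k where "k = Suc N"
    define m where "m = 3 * k"
    have m0: "0 < m" by (simp add: m_def k_def)
    let ?V = "{x. x < 4*m \<and> even x}"
    let ?FX = "\<lambda>k. orc (4*m) (addn (4*m)) k"
    obtain \<sigma> where s: "bij_betw \<sigma> {..<4*m} {..<4*m}"
      and alt: "k \<le> cost (Qo (4*m) {0} ?FX \<sigma> (op1 m)) (A (4*m)) \<or>
        (run (Qo (4*m) {0} ?FX \<sigma> (op1 m)) (A (4*m)) = run (Qo (4*m) {0} ?FX \<sigma> (addn (4*m))) (A (4*m)) \<and>
         (finite ((\<lambda>_. {}::nat set) (run (Qo (4*m) {0} ?FX \<sigma> (op1 m)) (A (4*m)))) \<and>
          card ((\<lambda>_. {}::nat set) (run (Qo (4*m) {0} ?FX \<sigma> (op1 m)) (A (4*m)))) \<le> 0 \<longrightarrow>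
          \<sigma> ` ((\<lambda>_. {}::nat set) (run (Qo (4*m) {0} ?FX \<sigma> (op1 m)) (A (4*m))) \<inter> {..<4*m}) \<subseteq> ?V))"
      using adversary[where V = ?V and n = "4*m" and opA = "op1 m" and opB = "addn (4*m)"
          and D = "{}" and f = id and K = k and L = 0 and t = "A (4*m)" and FK = "{0}" and fx = ?FX
          and outl = "\<lambda>_. {}::nat set", OF V_sub V_agree] V_card[of m]
      by (auto simp: m_def)
    have ab1: "abtab (4*m) (rel (4*m) \<sigma> (op1 m))" using rel_props(1)[OF op1_abtab[OF m0] s] .
    have ab2: "abtab (4*m) (addn (4*m))" using addn_abtab m0 by simp
    have ab3: "abtab (4*m) (rel (4*m) \<sigma> (addn (4*m)))" using rel_props(1)[OF ab2 s] .
    have q1: "Qo (4*m) {0} ?FX \<sigma> (op1 m) = orc2 (4*m) (addn (4*m)) (rel (4*m) \<sigma> (op1 m))" by (rule Qo_orc2)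
    have q2: "Qo (4*m) {0} ?FX \<sigma> (addn (4*m)) = orc2 (4*m) (addn (4*m)) (rel (4*m) \<sigma> (addn (4*m)))" by (rule Qo_orc2)
    have "k \<le> cost (orc2 (4*m) (addn (4*m)) (rel (4*m) \<sigma> (op1 m))) (A (4*m))"
    proof (rule ccontr)
      assume "\<not> ?thesis"
      then have eq: "run (orc2 (4*m) (addn (4*m)) (rel (4*m) \<sigma> (op1 m))) (A (4*m)) =
          run (orc2 (4*m) (addn (4*m)) (rel (4*m) \<sigma> (addn (4*m)))) (A (4*m))"
        using alt q1 q2 by auto
      have "tab_grp (4*m) (rel (4*m) \<sigma> (addn (4*m))) \<cong> tab_grp (4*m) (addn (4*m))"
        using rel_props(2)[OF ab2 s] by (rule is_isoI)
      then have "tab_grp (4*m) (addn (4*m)) \<cong> tab_grp (4*m) (rel (4*m) \<sigma> (addn (4*m)))"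
        using group.iso_sym ab3 unfolding abtab_def comm_group_def by blast
      then have "run (orc2 (4*m) (addn (4*m)) (rel (4*m) \<sigma> (addn (4*m)))) (A (4*m))"
        using corr ab2 ab3 by blast
      then have "tab_grp (4*m) (addn (4*m)) \<cong> tab_grp (4*m) (rel (4*m) \<sigma> (op1 m))"
        using corr ab2 ab1 eq by blast
      then show False using noniso[OF m0 s] by blast
    qed
    moreover have "orc2 (4*m) (addn (4*m)) (rel (4*m) \<sigma> (op1 m)) \<in> inputs2 (4*m)"
      using ab1 ab2 by (auto simp: inputs2_def)
    moreover have "N \<le> 4*m" "1/12 * real (4*m) = real k" by (simp_all add: m_def k_def)
    ultimately show "\<exists>n\<ge>N. \<exists>q\<in>inputs2 n. 1/12 * real n \<le> real (cost q (A n))"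
      by (intro exI[of _ "4*m"]) force
  qed
qed

lemma part2:
  "\<forall>A :: nat \<Rightarrow> nat list dtree.
        (\<forall>n mul. abtab n mul \<longrightarrow> is_basis (tab_grp n mul) (run (orc n mul) (A n)))
        \<longrightarrow> omega_lin inputs1 A"
proof (intro allI impI)
  fix A :: "nat \<Rightarrow> nat list dtree"
  assume corr: "\<forall>n mul. abtab n mul \<longrightarrow> is_basis (tab_grp n mul) (run (orc n mul) (A n))"
  show "omega_lin inputs1 A" unfolding omega_lin_def frequently_sequentially
  proof (intro exI[of _ "1/12::real"] conjI allI)
    show "(0::real) < 1/12" by simp
    fix N :: nat
    define k where "k = Suc N"
    define m where "m = 3 * k"
    have m0: "0 < m" by (simp add: m_def k_def)
    let ?V = "{x. x < 4*m \<and> even x}"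
    let ?FX = "\<lambda>k i j. 0::nat"
    let ?a = "addn (4*m)"
    obtain \<sigma> where s: "bij_betw \<sigma> {..<4*m} {..<4*m}"
      and alt: "k \<le> cost (Qo (4*m) {} ?FX \<sigma> ?a) (A (4*m)) \<or>
        (run (Qo (4*m) {} ?FX \<sigma> ?a) (A (4*m)) = run (Qo (4*m) {} ?FX \<sigma> ?a) (A (4*m)) \<and>
         (finite (set (run (Qo (4*m) {} ?FX \<sigma> ?a) (A (4*m)))) \<and>
          card (set (run (Qo (4*m) {} ?FX \<sigma> ?a) (A (4*m)))) \<le> 3 * k \<longrightarrow>
          \<sigma> ` (set (run (Qo (4*m) {} ?FX \<sigma> ?a) (A (4*m))) \<inter> {..<4*m}) \<subseteq> ?V))"
      using adversary[where V = ?V and n = "4*m" and opA = ?a and opB = ?a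
          and D = "{}" and f = id and K = k and L = "3*k" and t = "A (4*m)" and FK = "{}" and fx = ?FX
          and outl = set, OF V_sub] V_agree[of _ m] V_card[of m]
      by (auto simp: m_def)
    have ab2: "abtab (4*m) ?a" using addn_abtab m0 by simp
    have ab3: "abtab (4*m) (rel (4*m) \<sigma> ?a)" using rel_props(1)[OF ab2 s] .
    have q: "Qo (4*m) {} ?FX \<sigma> ?a = orc (4*m) (rel (4*m) \<sigma> ?a)" by (rule Qo_orc)
    have "k \<le> cost (orc (4*m) (rel (4*m) \<sigma> ?a)) (A (4*m))"
    proof (rule ccontr)
      assume nc: "\<not> ?thesis"
      define B where "B = run (orc (4*m) (rel (4*m) \<sigma> ?a)) (A (4*m))"
      define G where "G = tab_grp (4*m) (rel (4*m) \<sigma> ?a)"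
      have b: "is_basis G B" using corr ab3 by (simp add: B_def G_def)
      have gG: "group G" using ab3 unfolding abtab_def comm_group_def G_def by simp
      have cG: "carrier G = {..<4*m}" by (simp add: G_def tab_grp_def)
      have "2 ^ length B \<le> 12 * k" using basis_len[OF gG _ b] cG by (simp add: m_def)
      then have "length B \<le> 3 * k" using len_bound[of "length B" k] by (simp add: k_def)
      then have "card (set B) \<le> 3 * k" using card_length[of B] by linarith
      then have im: "\<sigma> ` (set B \<inter> {..<4*m}) \<subseteq> ?V" using alt nc q by (simp add: B_def)
      have sb: "set B \<subseteq> {..<4*m}" using b cG by (simp add: is_basis_def)
      have "generate G (set B) = {..<4*m}" using basis_gen[OF gG b] cG by simp
      moreover have "generate G (set B) \<noteq> {..<4*m}"
        unfolding G_def by (rule gen_proper[OF m0 s sb]) (use im sb in auto)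
      ultimately show False by simp
    qed
    moreover have "orc (4*m) (rel (4*m) \<sigma> ?a) \<in> inputs1 (4*m)"
      using ab3 by (auto simp: inputs1_def)
    moreover have "N \<le> 4*m" "1/12 * real (4*m) = real k" by (simp_all add: m_def k_def)
    ultimately show "\<exists>n\<ge>N. \<exists>q\<in>inputs1 n. 1/12 * real n \<le> real (cost q (A n))"
      by (intro exI[of _ "4*m"]) force
  qed
qed

lemma part3:
  "\<forall>A :: nat \<Rightarrow> (nat list \<times> relation list) dtree.
        (\<exists>\<epsilon> :: nat \<Rightarrow> real. \<epsilon> \<longlonglongrightarrow> 0 \<and>
           (\<forall>n mul. abtab n mul \<longrightarrow>
              is_presentation (tab_grp n mul) (fst (run (orc n mul) (A n)))
                (snd (run (orc n mul) (A n))) \<and>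
              real (rels_size (snd (run (orc n mul) (A n)))) \<le> real n powr \<epsilon> n))
        \<longrightarrow> omega_lin inputs1 A"
proof (intro allI impI)
  fix A :: "nat \<Rightarrow> (nat list \<times> relation list) dtree"
  assume "\<exists>\<epsilon> :: nat \<Rightarrow> real. \<epsilon> \<longlonglongrightarrow> 0 \<and>
           (\<forall>n mul. abtab n mul \<longrightarrow>
              is_presentation (tab_grp n mul) (fst (run (orc n mul) (A n)))
                (snd (run (orc n mul) (A n))) \<and>
              real (rels_size (snd (run (orc n mul) (A n)))) \<le> real n powr \<epsilon> n)"
  then obtain \<epsilon> :: "nat \<Rightarrow> real" where eps: "\<epsilon> \<longlonglongrightarrow> 0"
    and corr: "\<forall>n mul. abtab n mul \<longrightarrow>
              is_presentation (tab_grp n mul) (fst (run (orc n mul) (A n)))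
                (snd (run (orc n mul) (A n))) \<and>
              real (rels_size (snd (run (orc n mul) (A n)))) \<le> real n powr \<epsilon> n"
    by blast
  have "\<forall>\<^sub>F n in sequentially. \<epsilon> n < 1/2" using order_tendstoD(2)[OF eps, of "1/2"] by simp
  then obtain N0 where N0: "\<And>n. n \<ge> N0 \<Longrightarrow> \<epsilon> n < 1/2" unfolding eventually_sequentially by blast
  show "omega_lin inputs1 A" unfolding omega_lin_def frequently_sequentially
  proof (intro exI[of _ "1/12::real"] conjI allI)
    show "(0::real) < 1/12" by simp
    fix N :: nat
    define k where "k = N + N0 + 2"
    define m where "m = 3 * k"
    have m0: "0 < m" by (simp add: m_def k_def)
    let ?V = "{x. x < 4*m \<and> even x}"
    let ?FX = "\<lambda>k i j. 0::nat"
    let ?a = "addn (4*m)"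
    obtain \<sigma> where s: "bij_betw \<sigma> {..<4*m} {..<4*m}"
      and alt: "k \<le> cost (Qo (4*m) {} ?FX \<sigma> ?a) (A (4*m)) \<or>
        (run (Qo (4*m) {} ?FX \<sigma> ?a) (A (4*m)) = run (Qo (4*m) {} ?FX \<sigma> ?a) (A (4*m)) \<and>
         (finite (set (fst (run (Qo (4*m) {} ?FX \<sigma> ?a) (A (4*m))))) \<and>
          card (set (fst (run (Qo (4*m) {} ?FX \<sigma> ?a) (A (4*m))))) \<le> 3 * k \<longrightarrow>
          \<sigma> ` (set (fst (run (Qo (4*m) {} ?FX \<sigma> ?a) (A (4*m)))) \<inter> {..<4*m}) \<subseteq> ?V))"
      using adversary[where V = ?V and n = "4*m" and opA = ?a and opB = ?a
          and D = "{}" and f = id and K = k and L = "3*k" and t = "A (4*m)" and FK = "{}" and fx = ?FX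
          and outl = "\<lambda>r. set (fst r)", OF V_sub] V_agree[of _ m] V_card[of m]
      by (auto simp: m_def)
    have ab2: "abtab (4*m) ?a" using addn_abtab m0 by simp
    have ab3: "abtab (4*m) (rel (4*m) \<sigma> ?a)" using rel_props(1)[OF ab2 s] .
    have q: "Qo (4*m) {} ?FX \<sigma> ?a = orc (4*m) (rel (4*m) \<sigma> ?a)" by (rule Qo_orc)
    have "k \<le> cost (orc (4*m) (rel (4*m) \<sigma> ?a)) (A (4*m))"
    proof (rule ccontr)
      assume nc: "\<not> ?thesis"
      define B where "B = run (orc (4*m) (rel (4*m) \<sigma> ?a)) (A (4*m))"
      define G where "G = tab_grp (4*m) (rel (4*m) \<sigma> ?a)"
      have p: "is_presentation G (fst B) (snd B)" and sz: "real (rels_size (snd B)) \<le> real (4*m) powr \<epsilon> (4*m)"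
      proof -
        have c: "is_presentation (tab_grp (4*m) (rel (4*m) \<sigma> ?a)) (fst (run (orc (4*m) (rel (4*m) \<sigma> ?a)) (A (4*m))))
                (snd (run (orc (4*m) (rel (4*m) \<sigma> ?a)) (A (4*m)))) \<and>
              real (rels_size (snd (run (orc (4*m) (rel (4*m) \<sigma> ?a)) (A (4*m))))) \<le> real (4*m) powr \<epsilon> (4*m)"
          using corr ab3 by blast
        show "is_presentation G (fst B) (snd B)" using c unfolding B_def G_def by blast
        show "real (rels_size (snd B)) \<le> real (4*m) powr \<epsilon> (4*m)" using c unfolding B_def G_def by blast
      qed
      have gG: "group G" using ab3 unfolding abtab_def comm_group_def G_def by simp
      have cG: "carrier G = {..<4*m}" by (simp add: G_def tab_grp_def)
      have "(0::nat) \<in> carrier G" using cG m0 by simp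
      then have neG: "carrier G \<noteq> {}" by blast
      have "length (fst B) \<le> rels_size (snd B)" using pres_len[OF gG _ neG p] cG by simp
      moreover have "real (4*m) powr \<epsilon> (4*m) \<le> real (3 * k)"
      proof -
        have n16: "(16::real) \<le> real (4*m)" by (simp add: m_def k_def)
        have "\<epsilon> (4*m) \<le> 1/2" using N0[of "4*m"] by (simp add: m_def k_def)
        then have "real (4*m) powr \<epsilon> (4*m) \<le> real (4*m) powr (1/2)"
          by (rule powr_mono) (use n16 in simp)
        also have "\<dots> = sqrt (real (4*m))" by (simp add: powr_half_sqrt)
        also have "\<dots> \<le> real (4*m) / 4"
        proof -
          have "4 \<le> sqrt (real (4*m))" using n16 real_sqrt_le_mono[OF n16] by simp
          then have "4 * sqrt (real (4*m)) \<le> sqrt (real (4*m)) * sqrt (real (4*m))"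
            by (rule mult_right_mono) simp
          then show ?thesis by simp
        qed
        also have "\<dots> = real (3 * k)" by (simp add: m_def)
        finally show ?thesis .
      qed
      ultimately have "length (fst B) \<le> 3 * k" using sz by linarith
      then have "card (set (fst B)) \<le> 3 * k" using card_length[of "fst B"] by linarith
      then have im: "\<sigma> ` (set (fst B) \<inter> {..<4*m}) \<subseteq> ?V" using alt nc q by (simp add: B_def)
      have sb: "set (fst B) \<subseteq> {..<4*m}" using p cG by (simp add: is_presentation_def)
      have "generate G (set (fst B)) = {..<4*m}" using p cG by (simp add: is_presentation_def)
      moreover have "generate G (set (fst B)) \<noteq> {..<4*m}"
        unfolding G_def by (rule gen_proper[OF m0 s sb]) (use im sb in auto)
      ultimately show False by simp
    qed
    moreover have "orc (4*m) (rel (4*m) \<sigma> ?a) \<in> inputs1 (4*m)"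
      using ab3 by (auto simp: inputs1_def)
    moreover have "N \<le> 4*m" "1/12 * real (4*m) = real k" by (simp_all add: m_def k_def)
    ultimately show "\<exists>n\<ge>N. \<exists>q\<in>inputs1 n. 1/12 * real n \<le> real (cost q (A n))"
      by (intro exI[of _ "4*m"]) force
  qed
qed

theorem mainTheorem19:
  shows
    "(\<forall>A :: nat \<Rightarrow> bool dtree.
        (\<forall>n mG mH. abtab n mG \<and> abtab n mH \<longrightarrow>
           (run (orc2 n mG mH) (A n) \<longleftrightarrow> tab_grp n mG \<cong> tab_grp n mH))
        \<longrightarrow> omega_lin inputs2 A)
   \<and> (\<forall>A :: nat \<Rightarrow> nat list dtree.
        (\<forall>n mul. abtab n mul \<longrightarrow> is_basis (tab_grp n mul) (run (orc n mul) (A n)))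
        \<longrightarrow> omega_lin inputs1 A)
   \<and> (\<forall>A :: nat \<Rightarrow> (nat list \<times> relation list) dtree.
        (\<exists>\<epsilon> :: nat \<Rightarrow> real. \<epsilon> \<longlonglongrightarrow> 0 \<and>
           (\<forall>n mul. abtab n mul \<longrightarrow>
              is_presentation (tab_grp n mul) (fst (run (orc n mul) (A n)))
                (snd (run (orc n mul) (A n))) \<and>
              real (rels_size (snd (run (orc n mul) (A n)))) \<le> real n powr \<epsilon> n))
        \<longrightarrow> omega_lin inputs1 A)"
  using part1 part2 part3 by blast

end
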